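(* Consider the fully discrete implicit variable-step BDF2 scheme described in the context. Suppose the adjacent time-step ratios satisfy $r_k\le r_s$ for $2\le k\le N$ and the time steps satisfy $\tau_n<\frac{4\delta(1+2r_n)}{1+r_n}$ for $1\le n\le N$ (with $r_1:=0$). Then for each $n$, $1\le n\le N$, given $u_h^{0},\dots,u_h^{n-1}$, the scheme has a unique solution $u_h^n\in\mathbb{V}_h$.
   Context: Let $L>0$, $\Omega=(0,L)^2$, $M$ a positive integer, $h=L/M$, $x_i=ih$, $y_j=jh$, $\Omega_h=\{(x_i,y_j):1\le i,j\le M\}$, $\bar\Omega_h=\{(x_i,y_j):0\le i,j\le M\}$, and $\mathbb{V}_h$ the space of grid functions on $\bar\Omega_h$ that are $L$-periodic in each direction. For $v\in\mathbb{V}_h$: $\delta_x v_{i+1/2,j}=(v_{i+1,j}-v_{ij})/h$, $\Delta_x v_{ij}=(v_{i+1,j}-v_{i-1,j})/(2h)$, $\delta_x^2 v_{ij}=(\delta_xv_{i+1/2,j}-\delta_xv_{i-1/2,j})/h$, and analogously in $y$; $\Delta_h=\delta_x^2+\delta_y^2$, $\nabla_h v_{ij}=(\Delta_x v_{ij},\Delta_y v_{ij})^T$, and for a vector grid function $\mathbf{g}=(g_1,g_2)$, $\nabla_h\cdot \mathbf g=\Delta_x g_1+\Delta_y g_2$. Inner product $\langle v,w\rangle=h^2\sum_{\mathrm{x}_h\in\Omega_h}v_hw_h$, $\|v\|=\sqrt{\langle v,v\rangle}$. Let $f(\mathbf{v})=(|\mathbf v|^2-1)\mathbf v$ and $\delta>0$.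 Time levels $0=t_0<t_1<\dots<t_N=T$, $\tau_n=t_n-t_{n-1}$, $r_n=\tau_n/\tau_{n-1}$ ($2\le n\le N$), and $\nabla_\tau v^n=v^n-v^{n-1}$. BDF2 kernels: $b_0^{(1)}=2/\tau_1$, and for $n\ge2$, $b_0^{(n)}=\frac{1+2r_n}{\tau_n(1+r_n)}$, $b_1^{(n)}=-\frac{r_n^2}{\tau_n(1+r_n)}$, $b_j^{(n)}=0$ for $j\ge2$; $D_2v^n=\sum_{k=1}^n b_{n-k}^{(n)}\nabla_\tau v^k$. The scheme is: $D_2u_h^n+\delta\Delta_h^2u_h^n-\nabla_h\cdot f(\nabla_hu_h^n)=0$ for $\mathrm{x}_h\in\Omega_h$, $1\le n\le N$, with $u_h^0=\varphi_0(\mathrm{x}_h)-\frac{\tau_1}{2}\varphi_1(\mathrm{x}_h)$, $\varphi_1=\nabla\cdot f(\nabla\varphi_0)-\delta\Delta^2\varphi_0$ for given periodic smooth data $\varphi_0\in H^4(\Omega)$. $r_s$ is a fixed constant with $0<r_s<4.864$ (the step-ratio threshold under which the BDF2 kernels are positive definite). *)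

theory Defs
  imports Complex_Main
begin

type_synonym grid = "int \<Rightarrow> int \<Rightarrow> real"

text \<open>Space V_h of grid functions that are periodic (period M in index, i.e. L in space)
  in each direction, extended to all integer indices.\<close>
definition Vh :: "nat \<Rightarrow> grid set" where
  "Vh M = {v. \<forall>i j. v (i + int M) j = v i j \<and> v i (j + int M) = v i j}"

text \<open>Forward differences: dx_half h v i j is delta_x v at (i+1/2, j).\<close>
definition dx_half :: "real \<Rightarrow> grid \<Rightarrow> grid" where
  "dx_half h v i j = (v (i+1) j - v i j) / h"
definition dy_half :: "real \<Rightarrow> grid \<Rightarrow> grid" where
  "dy_half h v i j = (v i (j+1) - v i j) / h"

definition Dx :: "real \<Rightarrow> grid \<Rightarrow> grid" where
  "Dx h v i j = (v (i+1) j - v (i-1) j) / (2*h)"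
definition Dy :: "real \<Rightarrow> grid \<Rightarrow> grid" where
  "Dy h v i j = (v i (j+1) - v i (j-1)) / (2*h)"

definition dxx :: "real \<Rightarrow> grid \<Rightarrow> grid" where
  "dxx h v i j = (dx_half h v i j - dx_half h v (i-1) j) / h"
definition dyy :: "real \<Rightarrow> grid \<Rightarrow> grid" where
  "dyy h v i j = (dy_half h v i j - dy_half h v i (j-1)) / h"
definition lap_h :: "real \<Rightarrow> grid \<Rightarrow> grid" where
  "lap_h h v i j = dxx h v i j + dyy h v i j"

definition grad_h :: "real \<Rightarrow> grid \<Rightarrow> int \<Rightarrow> int \<Rightarrow> real \<times> real" where
  "grad_h h v i j = (Dx h v i j, Dy h v i j)"
definition div_h :: "real \<Rightarrow> (int \<Rightarrow> int \<Rightarrow> real \<times> real) \<Rightarrow> grid" where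
  "div_h h g i j = Dx h (\<lambda>a b. fst (g a b)) i j + Dy h (\<lambda>a b. snd (g a b)) i j"

definition fnl :: "real \<times> real \<Rightarrow> real \<times> real" where
  "fnl p = ((fst p ^ 2 + snd p ^ 2 - 1) * fst p, (fst p ^ 2 + snd p ^ 2 - 1) * snd p)"

definition tau :: "(nat \<Rightarrow> real) \<Rightarrow> nat \<Rightarrow> real" where
  "tau t n = t n - t (n - 1)"
definition ratio :: "(nat \<Rightarrow> real) \<Rightarrow> nat \<Rightarrow> real" where
  "ratio t n = (if n \<ge> 2 then tau t n / tau t (n - 1) else 0)"

definition bker :: "(nat \<Rightarrow> real) \<Rightarrow> nat \<Rightarrow> nat \<Rightarrow> real" where
  "bker t n j =
     (if n = 1 then (if j = 0 then 2 / tau t 1 else 0)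
      else if j = 0 then (1 + 2 * ratio t n) / (tau t n * (1 + ratio t n))
      else if j = 1 then - (ratio t n ^ 2) / (tau t n * (1 + ratio t n))
      else 0)"

definition D2 :: "(nat \<Rightarrow> real) \<Rightarrow> (nat \<Rightarrow> grid) \<Rightarrow> nat \<Rightarrow> grid" where
  "D2 t u n i j = (\<Sum>k = 1..n. bker t n (n - k) * (u k i j - u (k - 1) i j))"

definition scheme_at :: "real \<Rightarrow> nat \<Rightarrow> real \<Rightarrow> (nat \<Rightarrow> real) \<Rightarrow> (nat \<Rightarrow> grid) \<Rightarrow> nat \<Rightarrow> bool" where
  "scheme_at L M \<delta> t u n \<longleftrightarrow>
     (let h = L / real M in
      \<forall>i \<in> {1..int M}. \<forall>j \<in> {1..int M}.
        D2 t u n i j + \<delta> * lap_h h (lap_h h (u n)) i j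
        - div_h h (\<lambda>a b. fnl (grad_h h (u n) a b)) i j = 0)"

end

theory Submission
  imports Defs "HOL-Analysis.Analysis"
begin


definition gsum :: "nat \<Rightarrow> grid \<Rightarrow> real" where
  "gsum M F = (\<Sum>i\<in>{1..int M}. \<Sum>j\<in>{1..int M}. F i j)"

lemma sum_shift1:
  fixes f :: "int \<Rightarrow> real"
  assumes per: "\<And>i. f (i + int M) = f i" and M: "M > 0"
  shows "(\<Sum>i\<in>{1..int M}. f (i+1)) = (\<Sum>i\<in>{1..int M}. f i)"
proof -
  have "(\<Sum>i\<in>{1..int M}. f (i+1)) = (\<Sum>i\<in>{2..int M + 1}. f i)"
    by (rule sum.reindex_bij_witness[of _ "\<lambda>i. i - 1" "\<lambda>i. i + 1"]) (use M in auto)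
  also have "{2..int M + 1} = insert (int M + 1) {2..int M}" using M by auto
  also have "{1..int M} = insert 1 {2..int M}" using M by auto
  ultimately show ?thesis using per[of 1] M by (simp add: add.commute)
qed

lemma Vh_perx: "v \<in> Vh M \<Longrightarrow> v (i + int M) j = v i j" by (simp add: Vh_def)
lemma Vh_pery: "v \<in> Vh M \<Longrightarrow> v i (j + int M) = v i j" by (simp add: Vh_def)
lemma Vh_perx2: "v \<in> Vh M \<Longrightarrow> v (i + int M + k) j = v (i + k) j"
  using Vh_perx[of v M "i+k" j] by (simp add: ac_simps)
lemma Vh_perx3: "v \<in> Vh M \<Longrightarrow> v (i + int M - k) j = v (i - k) j"
  using Vh_perx[of v M "i-k" j] by (simp add: algebra_simps)
lemma Vh_pery2: "v \<in> Vh M \<Longrightarrow> v i (j + int M + k) = v i (j + k)"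
  using Vh_pery[of v M i "j+k"] by (simp add: ac_simps)
lemma Vh_pery3: "v \<in> Vh M \<Longrightarrow> v i (j + int M - k) = v i (j - k)"
  using Vh_pery[of v M i "j-k"] by (simp add: algebra_simps)
lemmas Vh_per = Vh_perx Vh_pery Vh_perx2 Vh_perx3 Vh_pery2 Vh_pery3

lemma VhI: "(\<And>i j. v (i + int M) j = v i j) \<Longrightarrow> (\<And>i j. v i (j + int M) = v i j) \<Longrightarrow> v \<in> Vh M"
  by (simp add: Vh_def)

lemma Vh_shx1: "a \<in> Vh M \<Longrightarrow> (\<lambda>i j. a (i + k) j) \<in> Vh M"
  by (rule VhI) (simp_all add: Vh_per)
lemma Vh_shx2: "a \<in> Vh M \<Longrightarrow> (\<lambda>i j. a (i - k) j) \<in> Vh M"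
  by (rule VhI) (simp_all add: Vh_per)
lemma Vh_shy1: "a \<in> Vh M \<Longrightarrow> (\<lambda>i j. a i (j + k)) \<in> Vh M"
  by (rule VhI) (simp_all add: Vh_per)
lemma Vh_shy2: "a \<in> Vh M \<Longrightarrow> (\<lambda>i j. a i (j - k)) \<in> Vh M"
  by (rule VhI) (simp_all add: Vh_per)
lemma Vh_fun2: "a \<in> Vh M \<Longrightarrow> b \<in> Vh M \<Longrightarrow> (\<lambda>i j. F (a i j) (b i j)) \<in> Vh M"
  by (rule VhI) (simp_all add: Vh_per)
lemma Vh_fun1: "a \<in> Vh M \<Longrightarrow> (\<lambda>i j. F (a i j)) \<in> Vh M"
  by (rule VhI) (simp_all add: Vh_per)
lemma Vh_mult: "a \<in> Vh M \<Longrightarrow> b \<in> Vh M \<Longrightarrow> (\<lambda>i j. a i j * b i j) \<in> Vh M"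
  by (rule Vh_fun2)
lemma Vh_add: "a \<in> Vh M \<Longrightarrow> b \<in> Vh M \<Longrightarrow> (\<lambda>i j. a i j + b i j) \<in> Vh M"
  by (rule Vh_fun2)
lemma Vh_diff: "a \<in> Vh M \<Longrightarrow> b \<in> Vh M \<Longrightarrow> (\<lambda>i j. a i j - b i j) \<in> Vh M"
  by (rule Vh_fun2)
lemma Vh_const: "(\<lambda>i j. c) \<in> Vh M" by (rule VhI) simp_all

lemma Vh_Dx: "a \<in> Vh M \<Longrightarrow> Dx h a \<in> Vh M"
  by (rule VhI) (simp_all add: Vh_per Dx_def)
lemma Vh_Dy: "a \<in> Vh M \<Longrightarrow> Dy h a \<in> Vh M"
  by (rule VhI) (simp_all add: Vh_per Dy_def)
lemma Vh_dxh: "a \<in> Vh M \<Longrightarrow> dx_half h a \<in> Vh M"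
  by (rule VhI) (simp_all add: Vh_per dx_half_def)
lemma Vh_dyh: "a \<in> Vh M \<Longrightarrow> dy_half h a \<in> Vh M"
  by (rule VhI) (simp_all add: Vh_per dy_half_def)
lemma Vh_dxx: "a \<in> Vh M \<Longrightarrow> dxx h a \<in> Vh M"
  using Vh_dxh[of a M h]
  by (intro VhI) (simp_all add: Vh_per dxx_def)
lemma Vh_dyy: "a \<in> Vh M \<Longrightarrow> dyy h a \<in> Vh M"
  using Vh_dyh[of a M h]
  by (intro VhI) (simp_all add: Vh_per dyy_def)
lemma Vh_lap: "a \<in> Vh M \<Longrightarrow> lap_h h a \<in> Vh M"
  using Vh_dxx[of a M h] Vh_dyy[of a M h]
  by (intro VhI) (simp_all add: Vh_per lap_h_def)

lemmas Vh_intros = Vh_shx1 Vh_shx2 Vh_shy1 Vh_shy2 Vh_mult Vh_add Vh_diff Vh_const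
  Vh_Dx Vh_Dy Vh_dxh Vh_dyh Vh_lap

lemma gsum_shiftx:
  assumes "F \<in> Vh M" "M > 0"
  shows "gsum M (\<lambda>i j. F (i+1) j) = gsum M F"
  unfolding gsum_def
  by (rule sum_shift1[where f = "\<lambda>i. \<Sum>j\<in>{1..int M}. F i j"]) (use assms in \<open>auto simp: Vh_perx\<close>)

lemma gsum_shifty:
  assumes "F \<in> Vh M" "M > 0"
  shows "gsum M (\<lambda>i j. F i (j+1)) = gsum M F"
  unfolding gsum_def
  by (rule sum.cong[OF refl], rule sum_shift1[where f = "\<lambda>j. F _ j"]) (use assms in \<open>auto simp: Vh_pery\<close>)

lemma gsum_shiftx':
  assumes "F \<in> Vh M" "M > 0"
  shows "gsum M (\<lambda>i j. F (i-1) j) = gsum M F"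
  using gsum_shiftx[of "\<lambda>i j. F (i-1) j" M] assms by (simp add: Vh_shx2)

lemma gsum_shifty':
  assumes "F \<in> Vh M" "M > 0"
  shows "gsum M (\<lambda>i j. F i (j-1)) = gsum M F"
  using gsum_shifty[of "\<lambda>i j. F i (j-1)" M] assms by (simp add: Vh_shy2)

lemma gsum_add: "gsum M (\<lambda>i j. F i j + G i j) = gsum M F + gsum M G"
  by (simp add: gsum_def sum.distrib)
lemma gsum_diff: "gsum M (\<lambda>i j. F i j - G i j) = gsum M F - gsum M G"
  by (simp add: gsum_def sum_subtractf)
lemma gsum_cmult: "gsum M (\<lambda>i j. c * F i j) = c * gsum M F"
  by (simp add: gsum_def sum_distrib_left)
lemma gsum_div: "gsum M (\<lambda>i j. F i j / c) = gsum M F / c"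
  by (simp add: gsum_def sum_divide_distrib)
lemma gsum_minus: "gsum M (\<lambda>i j. - F i j) = - gsum M F"
  by (simp add: gsum_def sum_negf)
lemma gsum_mono: "(\<And>i j. F i j \<le> G i j) \<Longrightarrow> gsum M F \<le> gsum M G"
  by (simp add: gsum_def sum_mono)
lemma gsum_nonneg: "(\<And>i j. 0 \<le> F i j) \<Longrightarrow> 0 \<le> gsum M F"
  by (simp add: gsum_def sum_nonneg)


lemma gsum_cong: "(\<And>i j. i \<in> {1..int M} \<Longrightarrow> j \<in> {1..int M} \<Longrightarrow> F i j = G i j) \<Longrightarrow> gsum M F = gsum M G"
  unfolding gsum_def by (intro sum.cong) auto

lemma gsum_delta:
  assumes "i0 \<in> {1..int M}" "j0 \<in> {1..int M}"
  shows "gsum M (\<lambda>i j. if i = i0 \<and> j = j0 then F i j else 0) = F i0 j0"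
proof -
  have "\<And>i. (\<Sum>j\<in>{1..int M}. if i = i0 \<and> j = j0 then F i j else 0) = (if i = i0 then F i j0 else 0)"
    using assms by (case_tac "i = i0") simp_all
  then show ?thesis using assms unfolding gsum_def by simp
qed

lemma gsum_ge_point:
  assumes "i0 \<in> {1..int M}" "j0 \<in> {1..int M}" "\<And>i j. 0 \<le> F i j"
  shows "F i0 j0 \<le> gsum M F"
proof -
  have "gsum M (\<lambda>i j. if i = i0 \<and> j = j0 then F i j else 0) \<le> gsum M F"
    by (rule gsum_mono) (use assms in auto)
  then show ?thesis using gsum_delta[OF assms(1,2)] by simp
qed

section \<open>Summation by parts\<close>

lemma SP_Dx:
  assumes a: "a \<in> Vh M" and b: "b \<in> Vh M" and M: "M > 0"
  shows "gsum M (\<lambda>i j. Dx h a i j * b i j) = - gsum M (\<lambda>i j. a i j * Dx h b i j)"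
proof -
  have e1: "gsum M (\<lambda>i j. Dx h a i j * b i j)
      = (gsum M (\<lambda>i j. a (i+1) j * b i j) - gsum M (\<lambda>i j. a (i-1) j * b i j)) / (2*h)"
    by (simp add: Dx_def gsum_div[symmetric] gsum_diff[symmetric] left_diff_distrib)
  have e2: "gsum M (\<lambda>i j. a i j * Dx h b i j)
      = (gsum M (\<lambda>i j. a i j * b (i+1) j) - gsum M (\<lambda>i j. a i j * b (i-1) j)) / (2*h)"
    by (simp add: Dx_def gsum_div[symmetric] gsum_diff[symmetric] right_diff_distrib)
  have s1: "gsum M (\<lambda>i j. a (i+1) j * b i j) = gsum M (\<lambda>i j. a i j * b (i-1) j)"
    using gsum_shiftx[of "\<lambda>i j. a i j * b (i-1) j" M] a b M by (simp add: Vh_intros Vh_fun1)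
  have s2: "gsum M (\<lambda>i j. a (i-1) j * b i j) = gsum M (\<lambda>i j. a i j * b (i+1) j)"
    using gsum_shiftx[of "\<lambda>i j. a (i-1) j * b i j" M] a b M by (simp add: Vh_intros Vh_fun1)
  show ?thesis using e1 e2 s1 s2 by (simp add: minus_divide_left)
qed

lemma SP_Dy:
  assumes a: "a \<in> Vh M" and b: "b \<in> Vh M" and M: "M > 0"
  shows "gsum M (\<lambda>i j. Dy h a i j * b i j) = - gsum M (\<lambda>i j. a i j * Dy h b i j)"
proof -
  have e1: "gsum M (\<lambda>i j. Dy h a i j * b i j)
      = (gsum M (\<lambda>i j. a i (j+1) * b i j) - gsum M (\<lambda>i j. a i (j-1) * b i j)) / (2*h)"
    by (simp add: Dy_def gsum_div[symmetric] gsum_diff[symmetric] left_diff_distrib)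
  have e2: "gsum M (\<lambda>i j. a i j * Dy h b i j)
      = (gsum M (\<lambda>i j. a i j * b i (j+1)) - gsum M (\<lambda>i j. a i j * b i (j-1))) / (2*h)"
    by (simp add: Dy_def gsum_div[symmetric] gsum_diff[symmetric] right_diff_distrib)
  have s1: "gsum M (\<lambda>i j. a i (j+1) * b i j) = gsum M (\<lambda>i j. a i j * b i (j-1))"
    using gsum_shifty[of "\<lambda>i j. a i j * b i (j-1)" M] a b M by (simp add: Vh_intros Vh_fun1)
  have s2: "gsum M (\<lambda>i j. a i (j-1) * b i j) = gsum M (\<lambda>i j. a i j * b i (j+1))"
    using gsum_shifty[of "\<lambda>i j. a i (j-1) * b i j" M] a b M by (simp add: Vh_intros Vh_fun1)
  show ?thesis using e1 e2 s1 s2 by (simp add: minus_divide_left)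
qed

lemma lap_expand:
  assumes h: "h \<noteq> 0"
  shows "lap_h h a i j = (a (i+1) j + a (i-1) j + a i (j+1) + a i (j-1) - 4 * a i j) / h^2"
  using h by (simp add: lap_h_def dxx_def dyy_def dx_half_def dy_half_def field_simps power2_eq_square)

lemma SP_lap:
  assumes a: "a \<in> Vh M" and b: "b \<in> Vh M" and M: "M > 0" and h: "h \<noteq> 0"
  shows "gsum M (\<lambda>i j. lap_h h a i j * b i j) = gsum M (\<lambda>i j. a i j * lap_h h b i j)"
proof -
  have e1: "gsum M (\<lambda>i j. lap_h h a i j * b i j)
     = (gsum M (\<lambda>i j. a (i+1) j * b i j) + gsum M (\<lambda>i j. a (i-1) j * b i j)
       + gsum M (\<lambda>i j. a i (j+1) * b i j) + gsum M (\<lambda>i j. a i (j-1) * b i j)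
       - 4 * gsum M (\<lambda>i j. a i j * b i j)) / h^2"
    by (simp add: lap_expand[OF h] gsum_div[symmetric] gsum_diff[symmetric] gsum_add[symmetric]
          gsum_cmult[symmetric] algebra_simps)
  have e2: "gsum M (\<lambda>i j. a i j * lap_h h b i j)
     = (gsum M (\<lambda>i j. a i j * b (i+1) j) + gsum M (\<lambda>i j. a i j * b (i-1) j)
       + gsum M (\<lambda>i j. a i j * b i (j+1)) + gsum M (\<lambda>i j. a i j * b i (j-1))
       - 4 * gsum M (\<lambda>i j. a i j * b i j)) / h^2"
    by (simp add: lap_expand[OF h] gsum_div[symmetric] gsum_diff[symmetric] gsum_add[symmetric]
          gsum_cmult[symmetric] algebra_simps)
  have s1: "gsum M (\<lambda>i j. a (i+1) j * b i j) = gsum M (\<lambda>i j. a i j * b (i-1) j)"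
    using gsum_shiftx[of "\<lambda>i j. a i j * b (i-1) j" M] a b M by (simp add: Vh_intros Vh_fun1)
  have s2: "gsum M (\<lambda>i j. a (i-1) j * b i j) = gsum M (\<lambda>i j. a i j * b (i+1) j)"
    using gsum_shiftx[of "\<lambda>i j. a (i-1) j * b i j" M] a b M by (simp add: Vh_intros Vh_fun1)
  have s3: "gsum M (\<lambda>i j. a i (j+1) * b i j) = gsum M (\<lambda>i j. a i j * b i (j-1))"
    using gsum_shifty[of "\<lambda>i j. a i j * b i (j-1)" M] a b M by (simp add: Vh_intros Vh_fun1)
  have s4: "gsum M (\<lambda>i j. a i (j-1) * b i j) = gsum M (\<lambda>i j. a i j * b i (j+1))"
    using gsum_shifty[of "\<lambda>i j. a i (j-1) * b i j" M] a b M by (simp add: Vh_intros Vh_fun1)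
  show ?thesis using e1 e2 s1 s2 s3 s4 by simp
qed

lemma SP_self:
  assumes a: "a \<in> Vh M" and M: "M > 0" and h: "h \<noteq> 0"
  shows "gsum M (\<lambda>i j. a i j * lap_h h a i j)
       = - gsum M (\<lambda>i j. (dx_half h a i j)^2 + (dy_half h a i j)^2)"
proof -
  have e1: "gsum M (\<lambda>i j. a i j * lap_h h a i j)
     = (gsum M (\<lambda>i j. a i j * a (i+1) j) + gsum M (\<lambda>i j. a i j * a (i-1) j)
       + gsum M (\<lambda>i j. a i j * a i (j+1)) + gsum M (\<lambda>i j. a i j * a i (j-1))
       - 4 * gsum M (\<lambda>i j. (a i j)^2)) / h^2"
    by (simp add: lap_expand[OF h] gsum_div[symmetric] gsum_diff[symmetric] gsum_add[symmetric]
          gsum_cmult[symmetric] algebra_simps power2_eq_square)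
  have pw: "(dx_half h a i j)^2 + (dy_half h a i j)^2 = ((a (i+1) j)^2 + (a i (j+1))^2 + 2 * (a i j)^2
        - 2 * (a i j * a (i+1) j) - 2 * (a i j * a i (j+1))) / h^2" for i j
    using h by (simp add: dx_half_def dy_half_def field_simps power2_eq_square)
  have e2: "gsum M (\<lambda>i j. (dx_half h a i j)^2 + (dy_half h a i j)^2)
     = (gsum M (\<lambda>i j. (a (i+1) j)^2) + gsum M (\<lambda>i j. (a i (j+1))^2) + 2 * gsum M (\<lambda>i j. (a i j)^2)
        - 2 * gsum M (\<lambda>i j. a i j * a (i+1) j) - 2 * gsum M (\<lambda>i j. a i j * a i (j+1))) / h^2"
    by (simp only: pw gsum_div gsum_diff gsum_add gsum_cmult)
  have s1: "gsum M (\<lambda>i j. a i j * a (i-1) j) = gsum M (\<lambda>i j. a i j * a (i+1) j)"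
    using gsum_shiftx[of "\<lambda>i j. a i j * a (i-1) j" M] a M by (simp add: Vh_intros mult.commute)
  have s2: "gsum M (\<lambda>i j. a i j * a i (j-1)) = gsum M (\<lambda>i j. a i j * a i (j+1))"
    using gsum_shifty[of "\<lambda>i j. a i j * a i (j-1)" M] a M by (simp add: Vh_intros mult.commute)
  have s3: "gsum M (\<lambda>i j. (a (i+1) j)^2) = gsum M (\<lambda>i j. (a i j)^2)"
    using gsum_shiftx[OF Vh_fun1[OF a, of "\<lambda>x. x^2"] M] by simp
  have s4: "gsum M (\<lambda>i j. (a i (j+1))^2) = gsum M (\<lambda>i j. (a i j)^2)"
    using gsum_shifty[OF Vh_fun1[OF a, of "\<lambda>x. x^2"] M] by simp
  have L1: "gsum M (\<lambda>i j. a i j * lap_h h a i j) = (2 * gsum M (\<lambda>i j. a i j * a (i+1) j)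
      + 2 * gsum M (\<lambda>i j. a i j * a i (j+1)) - 4 * gsum M (\<lambda>i j. (a i j)^2)) / h^2"
    unfolding e1 s1 s2 by (rule arg_cong[where f = "\<lambda>x. x / h^2"]) linarith
  have L2: "gsum M (\<lambda>i j. (dx_half h a i j)^2 + (dy_half h a i j)^2) = (4 * gsum M (\<lambda>i j. (a i j)^2)
      - 2 * gsum M (\<lambda>i j. a i j * a (i+1) j) - 2 * gsum M (\<lambda>i j. a i j * a i (j+1))) / h^2"
    unfolding e2 s3 s4 by (rule arg_cong[where f = "\<lambda>x. x / h^2"]) linarith
  show ?thesis unfolding L1 L2 minus_divide_left by (rule arg_cong[where f = "\<lambda>x. x / h^2"]) linarith
qed

lemma Dx_le:
  assumes a: "a \<in> Vh M" and M: "M > 0" and h: "h \<noteq> 0"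
  shows "gsum M (\<lambda>i j. (Dx h a i j)^2 + (Dy h a i j)^2)
       \<le> gsum M (\<lambda>i j. (dx_half h a i j)^2 + (dy_half h a i j)^2)"
proof -
  have p: "(Dx h a i j)^2 + (Dy h a i j)^2 \<le>
     ((dx_half h a i j)^2 + (dx_half h a (i-1) j)^2 + (dy_half h a i j)^2 + (dy_half h a i (j-1))^2) / 2"
    for i j
  proof -
    have d1: "Dx h a i j = (dx_half h a i j + dx_half h a (i-1) j) / 2"
      using h by (simp add: Dx_def dx_half_def field_simps)
    have d2: "Dy h a i j = (dy_half h a i j + dy_half h a i (j-1)) / 2"
      using h by (simp add: Dy_def dy_half_def field_simps)
    have sq: "((x::real) + y)^2/4 \<le> (x^2 + y^2)/2" for x y
      using sum_squares_ge_zero[of "x - y" 0] by (simp add: power2_eq_square algebra_simps)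
    show ?thesis unfolding d1 d2
      using sq[of "dx_half h a i j" "dx_half h a (i-1) j"] sq[of "dy_half h a i j" "dy_half h a i (j-1)"]
      by (simp add: power_divide)
  qed
  have "gsum M (\<lambda>i j. (Dx h a i j)^2 + (Dy h a i j)^2) \<le>
     gsum M (\<lambda>i j. ((dx_half h a i j)^2 + (dx_half h a (i-1) j)^2 + (dy_half h a i j)^2 + (dy_half h a i (j-1))^2) / 2)"
    by (rule gsum_mono) (rule p)
  also have "\<dots> = (gsum M (\<lambda>i j. (dx_half h a i j)^2) + gsum M (\<lambda>i j. (dx_half h a (i-1) j)^2)
      + gsum M (\<lambda>i j. (dy_half h a i j)^2) + gsum M (\<lambda>i j. (dy_half h a i (j-1))^2)) / 2"
    by (simp add: gsum_div gsum_add)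
  also have "\<dots> = gsum M (\<lambda>i j. (dx_half h a i j)^2 + (dy_half h a i j)^2)"
  proof -
    have s1: "gsum M (\<lambda>i j. (dx_half h a (i-1) j)^2) = gsum M (\<lambda>i j. (dx_half h a i j)^2)"
      by (rule gsum_shiftx'[OF Vh_fun1[OF Vh_dxh[OF a]] M])
    have s2: "gsum M (\<lambda>i j. (dy_half h a i (j-1))^2) = gsum M (\<lambda>i j. (dy_half h a i j)^2)"
      by (rule gsum_shifty'[OF Vh_fun1[OF Vh_dyh[OF a]] M])
    show ?thesis unfolding gsum_add s1 s2 by (simp add: field_simps)
  qed
  finally show ?thesis .
qed



definition gx :: "real \<Rightarrow> grid \<Rightarrow> grid" where
  "gx h w i j = ((Dx h w i j)^2 + (Dy h w i j)^2 - 1) * Dx h w i j"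
definition gy :: "real \<Rightarrow> grid \<Rightarrow> grid" where
  "gy h w i j = ((Dx h w i j)^2 + (Dy h w i j)^2 - 1) * Dy h w i j"

lemma div_fnl: "div_h h (\<lambda>a b. fnl (grad_h h w a b)) i j = Dx h (gx h w) i j + Dy h (gy h w) i j"
  by (simp add: div_h_def fnl_def grad_h_def gx_def[abs_def] gy_def[abs_def])

lemma Vh_gx: "w \<in> Vh M \<Longrightarrow> gx h w \<in> Vh M"
  using Vh_Dx[of w M h] Vh_Dy[of w M h] by (intro VhI) (simp_all add: gx_def Vh_per)
lemma Vh_gy: "w \<in> Vh M \<Longrightarrow> gy h w \<in> Vh M"
  using Vh_Dx[of w M h] Vh_Dy[of w M h] by (intro VhI) (simp_all add: gy_def Vh_per)

definition Res :: "real \<Rightarrow> real \<Rightarrow> real \<Rightarrow> grid \<Rightarrow> grid \<Rightarrow> grid" where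
  "Res h \<delta> b0 c w i j = b0 * w i j + c i j + \<delta> * lap_h h (lap_h h w) i j
      - (Dx h (gx h w) i j + Dy h (gy h w) i j)"

definition Ider :: "real \<Rightarrow> real \<Rightarrow> real \<Rightarrow> grid \<Rightarrow> grid \<Rightarrow> grid \<Rightarrow> grid" where
  "Ider h \<delta> b0 c w e i j = b0 * w i j * e i j + c i j * e i j + \<delta> * (lap_h h w i j * lap_h h e i j)
      + (gx h w i j * Dx h e i j + gy h w i j * Dy h e i j)"

lemma key_identity:
  assumes w: "w \<in> Vh M" and e: "e \<in> Vh M" and M: "M > 0" and h: "h \<noteq> 0"
  shows "gsum M (\<lambda>i j. Res h \<delta> b0 c w i j * e i j) = gsum M (Ider h \<delta> b0 c w e)"
proof -
  have "gsum M (\<lambda>i j. Res h \<delta> b0 c w i j * e i j) = gsum M (\<lambda>i j.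
      (b0 * w i j * e i j + c i j * e i j) + \<delta> * (lap_h h (lap_h h w) i j * e i j)
      - Dx h (gx h w) i j * e i j - Dy h (gy h w) i j * e i j)"
    by (rule arg_cong[where f = "gsum M"]) (auto simp: fun_eq_iff Res_def algebra_simps)
  also have "\<dots> = gsum M (\<lambda>i j. b0 * w i j * e i j + c i j * e i j)
      + \<delta> * gsum M (\<lambda>i j. lap_h h (lap_h h w) i j * e i j)
      - gsum M (\<lambda>i j. Dx h (gx h w) i j * e i j) - gsum M (\<lambda>i j. Dy h (gy h w) i j * e i j)"
    by (simp only: gsum_add gsum_diff gsum_cmult)
  also have "\<dots> = gsum M (\<lambda>i j. b0 * w i j * e i j + c i j * e i j)
      + \<delta> * gsum M (\<lambda>i j. lap_h h w i j * lap_h h e i j)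
      + gsum M (\<lambda>i j. gx h w i j * Dx h e i j) + gsum M (\<lambda>i j. gy h w i j * Dy h e i j)"
    using SP_lap[OF Vh_lap[OF w] e M h] SP_Dx[OF Vh_gx[OF w] e M] SP_Dy[OF Vh_gy[OF w] e M]
    by simp
  also have "\<dots> = gsum M (Ider h \<delta> b0 c w e)"
    unfolding Ider_def by (simp only: gsum_add gsum_diff gsum_cmult)
  finally show ?thesis .
qed


definition En :: "nat \<Rightarrow> real \<Rightarrow> real \<Rightarrow> real \<Rightarrow> grid \<Rightarrow> grid \<Rightarrow> real" where
  "En M h \<delta> b0 c w = gsum M (\<lambda>i j. b0/2 * (w i j)^2 + c i j * w i j + \<delta>/2 * (lap_h h w i j)^2
      + ((Dx h w i j)^2 + (Dy h w i j)^2 - 1)^2 / 4)"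

lemma Dx_lin: "Dx h (\<lambda>i j. w i j + s * e i j) i j = Dx h w i j + s * Dx h e i j"
  by (cases "h = 0") (simp_all add: Dx_def field_simps)
lemma Dy_lin: "Dy h (\<lambda>i j. w i j + s * e i j) i j = Dy h w i j + s * Dy h e i j"
  by (cases "h = 0") (simp_all add: Dy_def field_simps)
lemma lap_lin: "lap_h h (\<lambda>i j. w i j + s * e i j) i j = lap_h h w i j + s * lap_h h e i j"
  by (cases "h = 0") (simp_all add: lap_h_def dxx_def dyy_def dx_half_def dy_half_def field_simps)

lemma Dx_diff: "Dx h (\<lambda>i j. w i j - e i j) i j = Dx h w i j - Dx h e i j"
  by (cases "h = 0") (simp_all add: Dx_def field_simps)
lemma Dy_diff: "Dy h (\<lambda>i j. w i j - e i j) i j = Dy h w i j - Dy h e i j"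
  by (cases "h = 0") (simp_all add: Dy_def field_simps)
lemma lap_diff: "lap_h h (\<lambda>i j. w i j - e i j) i j = lap_h h w i j - lap_h h e i j"
  by (cases "h = 0") (simp_all add: lap_h_def dxx_def dyy_def dx_half_def dy_half_def field_simps)


lemma loc_deriv:
  "((\<lambda>s. b0/2 * (x + s*y)^2 + c*(x + s*y) + \<delta>/2 * (a + s*b)^2 + ((p + s*q)^2 + (r + s*z)^2 - 1)^2/4)
     has_real_derivative (b0*x*y + c*y + \<delta>*(a*b) + ((p^2 + r^2 - 1)*p*q + (p^2 + r^2 - 1)*r*z))) (at 0)"
  by (auto intro!: derivative_eq_intros simp: field_simps power2_eq_square)


lemma En_deriv:
  "((\<lambda>s. En M h \<delta> b0 c (\<lambda>i j. w i j + s * e i j)) has_real_derivative gsum M (Ider h \<delta> b0 c w e)) (at 0)"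
  unfolding En_def gsum_def Ider_def gx_def gy_def
  by (simp only: Dx_lin Dy_lin lap_lin) (intro DERIV_sum loc_deriv)



lemma Vh_shift_nat: assumes v: "v \<in> Vh M" shows "v (i + int M * int m) j = v i j"
proof (induction m)
  case (Suc m)
  have eq: "i + int M * int (Suc m) = (i + int M * int m) + int M" by (simp add: algebra_simps)
  show ?case by (simp only: eq Vh_perx[OF v] Suc.IH)
qed simp

lemma Vh_shift_nat_y: assumes v: "v \<in> Vh M" shows "v i (j + int M * int m) = v i j"
proof (induction m)
  case (Suc m)
  have eq: "j + int M * int (Suc m) = (j + int M * int m) + int M" by (simp add: algebra_simps)
  show ?case by (simp only: eq Vh_pery[OF v] Suc.IH)
qed simp

lemma Vh_shift_int: assumes v: "v \<in> Vh M" shows "v (i + int M * k) j = v i j"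
proof (cases "k \<ge> 0")
  case True
  then obtain m where "k = int m" by (metis nonneg_eq_int)
  then show ?thesis using Vh_shift_nat[OF v] by simp
next
  case False
  then obtain m where m: "k = - int m" by (intro that[of "nat (- k)"]) simp
  have "v ((i + int M * k) + int M * int m) j = v (i + int M * k) j" using Vh_shift_nat[OF v] .
  then show ?thesis using m by simp
qed

lemma Vh_shift_int_y: assumes v: "v \<in> Vh M" shows "v i (j + int M * k) = v i j"
proof (cases "k \<ge> 0")
  case True
  then obtain m where "k = int m" by (metis nonneg_eq_int)
  then show ?thesis using Vh_shift_nat_y[OF v] by simp
next
  case False
  then obtain m where m: "k = - int m" by (intro that[of "nat (- k)"]) simp
  have "v i ((j + int M * k) + int M * int m) = v i (j + int M * k)" using Vh_shift_nat_y[OF v] .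
  then show ?thesis using m by simp
qed

lemma Vh_mod: assumes v: "v \<in> Vh M" shows "v i j = v (i mod int M) (j mod int M)"
proof -
  have a: "i mod int M = i + int M * (- (i div int M))"
    using minus_mult_div_eq_mod[of i "int M"] by simp
  have b: "j mod int M = j + int M * (- (j div int M))"
    using minus_mult_div_eq_mod[of j "int M"] by simp
  have "v (i + int M * (- (i div int M))) (j + int M * (- (j div int M))) = v i (j + int M * (- (j div int M)))"
    by (rule Vh_shift_int[OF v])
  also have "\<dots> = v i j" by (rule Vh_shift_int_y[OF v])
  finally have calc: "v (i + int M * (- (i div int M))) (j + int M * (- (j div int M))) = v i j" .
  show ?thesis unfolding a b by (rule sym[OF calc])
qed

definition red :: "nat \<Rightarrow> int \<Rightarrow> int" where "red M i = (i - 1) mod int M + 1"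

lemma red_in: "M > 0 \<Longrightarrow> red M i \<in> {1..int M}"
  by (auto simp: red_def) (metis int_one_le_iff_zero_less of_nat_0_less_iff pos_mod_bound zless_imp_add1_zle)

lemma red_mod: "red M i mod int M = i mod int M"
  by (simp add: red_def mod_add_left_eq)

lemma Vh_red: assumes v: "v \<in> Vh M" shows "v i j = v (red M i) (red M j)"
  using Vh_mod[OF v, of i j] Vh_mod[OF v, of "red M i" "red M j"] by (simp add: red_mod)

lemma Vh_eqI: assumes "v \<in> Vh M" "w \<in> Vh M" "M > 0"
  and "\<And>i j. i \<in> {1..int M} \<Longrightarrow> j \<in> {1..int M} \<Longrightarrow> v i j = w i j"
  shows "v = w"
proof (intro ext)
  fix i j
  show "v i j = w i j" using Vh_red[OF assms(1), of i j] Vh_red[OF assms(2), of i j]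
      assms(4)[OF red_in red_in] assms(3) by simp
qed

lemma mod_unique:
  assumes "i \<in> {1..int M}" "i0 \<in> {1..int M}"
  shows "i mod int M = i0 mod int M \<longleftrightarrow> i = i0"
proof
  assume "i mod int M = i0 mod int M"
  then have d: "int M dvd i - i0" by (simp add: mod_eq_dvd_iff)
  show "i = i0"
  proof (rule ccontr)
    assume "i \<noteq> i0"
    then have "\<bar>int M\<bar> \<le> \<bar>i - i0\<bar>" using d by (intro dvd_imp_le_int) auto
    then show False using assms by auto
  qed
qed simp

section \<open>Existence by minimisation\<close>

definition Pm :: "nat \<Rightarrow> (int \<times> int \<Rightarrow> real) \<Rightarrow> grid" where
  "Pm M c i j = c (i mod int M, j mod int M)"

lemma Vh_Pm: "Pm M c \<in> Vh M"
  by (rule VhI) (simp_all add: Pm_def)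

lemma Pm_of: "v \<in> Vh M \<Longrightarrow> Pm M (\<lambda>p. v (fst p) (snd p)) = v"
  by (auto simp: fun_eq_iff Pm_def Vh_mod[symmetric])

lemma cont_coord [continuous_intros]: "continuous_on S (\<lambda>c::'a \<Rightarrow> real. c k)"
  by (rule continuous_on_subset[OF continuous_on_product_coordinates]) simp

lemma cont_En: assumes "h \<noteq> 0" shows "continuous_on S (\<lambda>c. En M h \<delta> b0 cc (Pm M c))"
  unfolding En_def gsum_def lap_h_def dxx_def dyy_def dx_half_def dy_half_def Dx_def Dy_def Pm_def
  using assms by (intro continuous_intros) auto

lemma compact_box: "compact {c::int \<times> int \<Rightarrow> real. \<forall>k. c k \<in> {-R..R}}"
proof -
  have "compactin (product_topology (\<lambda>_. euclidean) UNIV) (PiE UNIV (\<lambda>_::int \<times> int. {-R..R::real}))"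
    by (simp add: compactin_PiE)
  then have "compact (PiE UNIV (\<lambda>_::int \<times> int. {-R..R::real}))"
    by (simp add: euclidean_product_topology)
  moreover have "PiE UNIV (\<lambda>_::int \<times> int. {-R..R::real}) = {c. \<forall>k. c k \<in> {-R..R}}"
    by (auto simp: PiE_def Pi_def extensional_def)
  ultimately show ?thesis by simp
qed

lemma quad_lower: fixes b0 x c :: real assumes "b0 > 0"
  shows "b0/4 * x^2 - c^2/b0 \<le> b0/2 * x^2 + c * x"
proof -
  have "(b0*x + 2*c)^2/(4*b0) = b0/4*x^2 + c*x + c^2/b0"
    using assms by (simp add: field_simps power2_eq_square)
  moreover have "0 \<le> (b0*x + 2*c)^2/(4*b0)" using assms by simp
  ultimately show ?thesis by linarith
qed

lemma exists_sol:
  assumes M: "M > 0" and h: "h \<noteq> 0" and dl: "\<delta> > 0" and b0: "b0 > 0"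
  shows "\<exists>w\<in>Vh M. \<forall>i\<in>{1..int M}. \<forall>j\<in>{1..int M}. Res h \<delta> b0 c w i j = 0"
proof -
  define E where "E = En M h \<delta> b0 c"
  define K where "K = gsum M (\<lambda>i j. (c i j)^2 / b0)"
  define E0 where "E0 = E (\<lambda>i j. 0)"
  define R where "R = 4 * (\<bar>E0\<bar> + \<bar>K\<bar> + 1) / b0 + 1"
  have R1: "R \<ge> 1" using b0 by (simp add: R_def)
  have bR: "b0/4 * R = \<bar>E0\<bar> + \<bar>K\<bar> + 1 + b0/4" using b0 by (simp add: R_def field_simps)
  have coer: "E v > E0" if v: "v \<in> Vh M" and i0: "i0 \<in> {1..int M}" and j0: "j0 \<in> {1..int M}"
    and big: "\<bar>v i0 j0\<bar> > R" for v i0 j0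
  proof -
    have "gsum M (\<lambda>i j. b0/2 * (v i j)^2 + c i j * v i j) \<le> E v"
      unfolding E_def En_def by (rule gsum_mono) (use dl in simp)
    moreover have "gsum M (\<lambda>i j. - ((c i j)^2 / b0) + (if i = i0 \<and> j = j0 then b0/4 * (v i j)^2 else 0))
        \<le> gsum M (\<lambda>i j. b0/2 * (v i j)^2 + c i j * v i j)"
    proof (rule gsum_mono)
      fix i j
      show "- ((c i j)^2 / b0) + (if i = i0 \<and> j = j0 then b0/4 * (v i j)^2 else 0)
          \<le> b0/2 * (v i j)^2 + c i j * v i j"
      proof -
        have q: "b0/4 * (v i j)^2 - (c i j)^2/b0 \<le> b0/2 * (v i j)^2 + c i j * v i j"
          by (rule quad_lower[OF b0])
        have nn: "(if i = i0 \<and> j = j0 then b0/4 * (v i j)^2 else 0) \<le> b0/4 * (v i j)^2"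
          using b0 by simp
        show ?thesis using q nn by linarith
      qed
    qed
    moreover have "gsum M (\<lambda>i j. - ((c i j)^2 / b0) + (if i = i0 \<and> j = j0 then b0/4 * (v i j)^2 else 0))
        = - K + b0/4 * (v i0 j0)^2"
      by (simp only: gsum_add gsum_minus gsum_delta[OF i0 j0] K_def)
    moreover have "R < (v i0 j0)^2"
    proof -
      have "R * 1 < \<bar>v i0 j0\<bar> * \<bar>v i0 j0\<bar>"
        using big R1 by (intro mult_strict_mono') auto
      then show ?thesis by (simp add: power2_eq_square)
    qed
    then have "b0/4 * R < b0/4 * (v i0 j0)^2" using b0 by simp
    ultimately show ?thesis using bR b0 abs_ge_self[of E0] abs_ge_minus_self[of K] by linarith
  qed
  define B where "B = {c::int \<times> int \<Rightarrow> real. \<forall>k. c k \<in> {-R..R}}"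
  have cB: "compact B" unfolding B_def by (rule compact_box)
  have zB: "(\<lambda>_. 0) \<in> B" using R1 by (simp add: B_def)
  have ctE: "continuous_on B (\<lambda>c. E (Pm M c))" unfolding E_def by (rule cont_En[OF h])
  obtain cs where cs: "cs \<in> B" "\<And>c. c \<in> B \<Longrightarrow> E (Pm M cs) \<le> E (Pm M c)"
    using continuous_attains_inf[OF cB _ ctE] zB by blast
  define ws where "ws = Pm M cs"
  have ws: "ws \<in> Vh M" by (simp add: ws_def Vh_Pm)
  have glob: "E ws \<le> E v" if v: "v \<in> Vh M" for v
  proof (cases "\<forall>i\<in>{1..int M}. \<forall>j\<in>{1..int M}. \<bar>v i j\<bar> \<le> R")
    case True
    have bnd: "\<bar>v a b\<bar> \<le> R" for a b
      using True Vh_red[OF v] red_in[OF M] by metis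
    have "v a b \<in> {-R..R}" for a b using bnd[of a b] by (auto simp: abs_le_iff)
    then have "(\<lambda>p. v (fst p) (snd p)) \<in> B" by (auto simp: B_def)
    from cs(2)[OF this] show ?thesis by (simp add: Pm_of[OF v] ws_def)
  next
    case False
    then obtain i0 j0 where "i0 \<in> {1..int M}" "j0 \<in> {1..int M}" "\<bar>v i0 j0\<bar> > R" by force
    then have "E v > E0" using coer v by blast
    moreover have "E ws \<le> E0" using cs(2)[OF zB] by (simp add: ws_def E0_def Pm_def[abs_def])
    ultimately show ?thesis by simp
  qed
  have "Res h \<delta> b0 c ws i0 j0 = 0" if i0: "i0 \<in> {1..int M}" and j0: "j0 \<in> {1..int M}" for i0 j0
  proof -
    define e where "e = (\<lambda>i j. if i mod int M = i0 mod int M \<and> j mod int M = j0 mod int M then 1 else (0::real))"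
    have e: "e \<in> Vh M" by (rule VhI) (simp_all add: e_def)
    have D: "((\<lambda>s. E (\<lambda>i j. ws i j + s * e i j)) has_real_derivative gsum M (Ider h \<delta> b0 c ws e)) (at 0)"
      unfolding E_def by (rule En_deriv)
    have "\<forall>y. \<bar>0 - y\<bar> < 1 \<longrightarrow> E (\<lambda>i j. ws i j + 0 * e i j) \<le> E (\<lambda>i j. ws i j + y * e i j)"
    proof (intro allI impI)
      fix y :: real
      have "(\<lambda>i j. ws i j + y * e i j) \<in> Vh M" by (rule Vh_add[OF ws Vh_mult[OF Vh_const e]])
      then show "E (\<lambda>i j. ws i j + 0 * e i j) \<le> E (\<lambda>i j. ws i j + y * e i j)"
        using glob by simp
    qed
    then have "gsum M (Ider h \<delta> b0 c ws e) = 0" using DERIV_local_min[OF D, of 1] by simp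
    then have "gsum M (\<lambda>i j. Res h \<delta> b0 c ws i j * e i j) = 0"
      using key_identity[OF ws e M h] by simp
    moreover have "gsum M (\<lambda>i j. Res h \<delta> b0 c ws i j * e i j)
        = gsum M (\<lambda>i j. if i = i0 \<and> j = j0 then Res h \<delta> b0 c ws i j else 0)"
      by (rule gsum_cong) (use mod_unique i0 j0 in \<open>auto simp: e_def\<close>)
    ultimately show ?thesis using gsum_delta[OF i0 j0] by simp
  qed
  then show ?thesis using ws by blast
qed

section \<open>Uniqueness\<close>

lemma mono_f:
  fixes p1 p2 q1 q2 :: real
  shows "((p1^2+p2^2-1)*p1 - (q1^2+q2^2-1)*q1)*(p1-q1) + ((p1^2+p2^2-1)*p2 - (q1^2+q2^2-1)*q2)*(p2-q2)
     \<ge> - ((p1-q1)^2 + (p2-q2)^2)"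
proof -
  have "((p1^2+p2^2-1)*p1 - (q1^2+q2^2-1)*q1)*(p1-q1) + ((p1^2+p2^2-1)*p2 - (q1^2+q2^2-1)*q2)*(p2-q2)
     + ((p1-q1)^2 + (p2-q2)^2)
     = ((p1^2+p2^2 - (q1^2+q2^2))^2 + (p1^2+p2^2+q1^2+q2^2)*((p1-q1)^2 + (p2-q2)^2)) / 2"
    by (simp add: field_simps power2_eq_square)
  moreover have "0 \<le> ((p1^2+p2^2 - (q1^2+q2^2))^2 + (p1^2+p2^2+q1^2+q2^2)*((p1-q1)^2 + (p2-q2)^2)) / 2"
    by (intro divide_nonneg_pos add_nonneg_nonneg mult_nonneg_nonneg) auto
  ultimately show ?thesis by linarith
qed

lemma unique_sol:
  assumes M: "M > 0" and h: "h \<noteq> 0" and dl: "\<delta> > 0" and b0: "4 * \<delta> * b0 > 1"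
    and w1: "w1 \<in> Vh M" and w2: "w2 \<in> Vh M"
    and r1: "\<forall>i\<in>{1..int M}. \<forall>j\<in>{1..int M}. Res h \<delta> b0 c w1 i j = 0"
    and r2: "\<forall>i\<in>{1..int M}. \<forall>j\<in>{1..int M}. Res h \<delta> b0 c w2 i j = 0"
  shows "w1 = w2"
proof -
  define e where "e = (\<lambda>i j. w1 i j - w2 i j)"
  have e: "e \<in> Vh M" unfolding e_def by (rule Vh_diff[OF w1 w2])
  define a where "a = 1 / (4 * \<delta>)"
  have ab: "a < b0" using b0 dl by (simp add: a_def field_simps)
  have z1: "gsum M (\<lambda>i j. Res h \<delta> b0 c w1 i j * e i j) = 0"
    using gsum_cong[of M "\<lambda>i j. Res h \<delta> b0 c w1 i j * e i j" "\<lambda>i j. 0"] r1 by (simp add: gsum_def)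
  have z2: "gsum M (\<lambda>i j. Res h \<delta> b0 c w2 i j * e i j) = 0"
    using gsum_cong[of M "\<lambda>i j. Res h \<delta> b0 c w2 i j * e i j" "\<lambda>i j. 0"] r2 by (simp add: gsum_def)
  have "gsum M (\<lambda>i j. Ider h \<delta> b0 c w1 e i j - Ider h \<delta> b0 c w2 e i j) = 0"
    using z1 z2 key_identity[OF w1 e M h] key_identity[OF w2 e M h] by (simp add: gsum_diff)
  moreover have "gsum M (\<lambda>i j. b0 * (e i j)^2 + \<delta> * (lap_h h e i j)^2 - ((Dx h e i j)^2 + (Dy h e i j)^2))
      \<le> gsum M (\<lambda>i j. Ider h \<delta> b0 c w1 e i j - Ider h \<delta> b0 c w2 e i j)"
  proof (rule gsum_mono)
    fix i j
    have idt: "Ider h \<delta> b0 c w1 e i j - Ider h \<delta> b0 c w2 e i j =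
        b0 * (e i j)^2 + \<delta> * (lap_h h e i j)^2
        + (((Dx h w1 i j)^2 + (Dy h w1 i j)^2 - 1) * Dx h w1 i j - ((Dx h w2 i j)^2 + (Dy h w2 i j)^2 - 1) * Dx h w2 i j)
            * (Dx h w1 i j - Dx h w2 i j)
        + (((Dx h w1 i j)^2 + (Dy h w1 i j)^2 - 1) * Dy h w1 i j - ((Dx h w2 i j)^2 + (Dy h w2 i j)^2 - 1) * Dy h w2 i j)
            * (Dy h w1 i j - Dy h w2 i j)"
      unfolding Ider_def gx_def gy_def e_def Dx_diff Dy_diff lap_diff
      by (simp add: algebra_simps power2_eq_square)
    have dd: "Dx h e i j = Dx h w1 i j - Dx h w2 i j" "Dy h e i j = Dy h w1 i j - Dy h w2 i j"
      unfolding e_def Dx_diff Dy_diff by simp_all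
    show "b0 * (e i j)^2 + \<delta> * (lap_h h e i j)^2 - ((Dx h e i j)^2 + (Dy h e i j)^2)
        \<le> Ider h \<delta> b0 c w1 e i j - Ider h \<delta> b0 c w2 e i j"
      unfolding idt dd using mono_f[of "Dx h w1 i j" "Dx h w2 i j" "Dy h w1 i j" "Dy h w2 i j"] by linarith
  qed
  moreover have "gsum M (\<lambda>i j. b0 * (e i j)^2 + \<delta> * (lap_h h e i j)^2 - ((Dx h e i j)^2 + (Dy h e i j)^2))
      = gsum M (\<lambda>i j. b0 * (e i j)^2 + \<delta> * (lap_h h e i j)^2) - gsum M (\<lambda>i j. (Dx h e i j)^2 + (Dy h e i j)^2)"
    by (simp only: gsum_diff)
  moreover note Dx_le[OF e M h]
  moreover note SP_self[OF e M h]
  moreover have "gsum M (\<lambda>i j. (b0 - a) * (e i j)^2) \<le>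
      gsum M (\<lambda>i j. b0 * (e i j)^2 + \<delta> * (lap_h h e i j)^2) + gsum M (\<lambda>i j. e i j * lap_h h e i j)"
  proof -
    have "gsum M (\<lambda>i j. (b0 - a) * (e i j)^2) \<le> gsum M (\<lambda>i j. b0 * (e i j)^2 + \<delta> * (lap_h h e i j)^2 + e i j * lap_h h e i j)"
    proof (rule gsum_mono)
      fix i j
      have "(2*\<delta>*lap_h h e i j + e i j)^2 / (4*\<delta>) = \<delta> * (lap_h h e i j)^2 + e i j * lap_h h e i j + a * (e i j)^2"
        using dl by (simp add: a_def field_simps power2_eq_square)
      moreover have "0 \<le> (2*\<delta>*lap_h h e i j + e i j)^2 / (4*\<delta>)" using dl by simp
      ultimately show "(b0 - a) * (e i j)^2 \<le> b0 * (e i j)^2 + \<delta> * (lap_h h e i j)^2 + e i j * lap_h h e i j"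
        by (simp add: algebra_simps)
    qed
    then show ?thesis by (simp only: gsum_add)
  qed
  ultimately have le0: "gsum M (\<lambda>i j. (b0 - a) * (e i j)^2) \<le> 0" by linarith
  show ?thesis
  proof (rule Vh_eqI[OF w1 w2 M])
    fix i j assume i: "i \<in> {1..int M}" and j: "j \<in> {1..int M}"
    have "(b0 - a) * (e i j)^2 \<le> 0"
      using gsum_ge_point[OF i j, of "\<lambda>i j. (b0 - a) * (e i j)^2"] le0 ab by simp
    then have "e i j = 0" using ab by (simp add: mult_le_0_iff)
    then show "w1 i j = w2 i j" by (simp add: e_def)
  qed
qed



lemma D2_split:
  assumes n: "1 \<le> n"
  shows "D2 t (u(n:=w)) n i j = bker t n 0 * w i j + D2 t (u(n := (\<lambda>_ _. 0))) n i j"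
proof -
  have "D2 t (u(n:=w)) n i j = (\<Sum>k=1..n. (if k = n then bker t n (n-k) * w i j else 0)
      + bker t n (n-k) * ((u(n := (\<lambda>_ _. 0))) k i j - (u(n := (\<lambda>_ _. 0))) (k-1) i j))"
    unfolding D2_def by (rule sum.cong) (auto simp: algebra_simps)
  also have "\<dots> = bker t n 0 * w i j + D2 t (u(n := (\<lambda>_ _. 0))) n i j"
    unfolding D2_def sum.distrib using n by simp
  finally show ?thesis .
qed

lemma scheme_iff:
  assumes "1 \<le> n"
  shows "scheme_at L M \<delta> t (u(n:=w)) n \<longleftrightarrow>
    (\<forall>i\<in>{1..int M}. \<forall>j\<in>{1..int M}. Res (L / real M) \<delta> (bker t n 0) (D2 t (u(n := (\<lambda>_ _. 0))) n) w i j = 0)"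
  unfolding scheme_at_def Let_def Res_def D2_split[OF assms, of t u w] div_fnl by simp

theorem theorem2p1:
  fixes L \<delta> T r_s :: real and M N :: nat and t :: "nat \<Rightarrow> real"
  assumes L_pos: "L > 0" and M_pos: "M > 0" and delta_pos: "\<delta> > 0"
    and rs_pos: "0 < r_s" and rs_bound: "r_s < 4.864"
    and t0: "t 0 = 0" and tN: "t N = T"
    and t_mono: "\<And>k. 1 \<le> k \<Longrightarrow> k \<le> N \<Longrightarrow> t (k - 1) < t k"
    and ratio_bound: "\<And>k. 2 \<le> k \<Longrightarrow> k \<le> N \<Longrightarrow> ratio t k \<le> r_s"
    and step_bound: "\<And>k. 1 \<le> k \<Longrightarrow> k \<le> N \<Longrightarrow>
                       tau t k < 4 * \<delta> * (1 + 2 * ratio t k) / (1 + ratio t k)"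
  shows "\<forall>n. 1 \<le> n \<and> n \<le> N \<longrightarrow>
           (\<forall>u :: nat \<Rightarrow> grid. (\<forall>k < n. u k \<in> Vh M) \<longrightarrow>
              (\<exists>!w. w \<in> Vh M \<and> scheme_at L M \<delta> t (u(n := w)) n))"
proof (intro allI impI)
  fix n :: nat and u :: "nat \<Rightarrow> grid"
  assume n: "1 \<le> n \<and> n \<le> N"
  define h where "h = L / real M"
  define b0 where "b0 = bker t n 0"
  define c where "c = D2 t (u(n := (\<lambda>_ _. 0))) n"
  have hpos: "h \<noteq> 0" using L_pos M_pos by (simp add: h_def)
  have taupos: "\<And>k. 1 \<le> k \<Longrightarrow> k \<le> N \<Longrightarrow> tau t k > 0" using t_mono by (simp add: tau_def)
  have b0facts: "b0 > 0 \<and> 4 * \<delta> * b0 > 1"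
  proof (cases "n = 1")
    case True
    have r1: "ratio t 1 = 0" by (simp add: ratio_def)
    have st: "tau t 1 < 4 * \<delta>" using step_bound[of 1] n True r1 by simp
    have tp: "tau t 1 > 0" using taupos[of 1] n True by simp
    have b0e: "b0 = 2 / tau t 1" using True by (simp add: b0_def bker_def)
    have "4 * \<delta> * b0 = (8 * \<delta>) / tau t 1" by (simp add: b0e)
    also have "\<dots> > 1" using st tp delta_pos by (simp add: less_divide_eq)
    finally show ?thesis using tp b0e by simp
  next
    case False
    then have n2: "n \<ge> 2" using n by simp
    have tpn: "tau t n > 0" using taupos n by simp
    have tpn1: "tau t (n-1) > 0" using taupos[of "n-1"] n n2 by simp
    have r: "ratio t n = tau t n / tau t (n-1)" using n2 by (simp add: ratio_def)
    have rpos: "ratio t n > 0" using r tpn tpn1 by simp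
    have b0e: "b0 = (1 + 2 * ratio t n) / (tau t n * (1 + ratio t n))"
      using False by (simp add: b0_def bker_def)
    have st: "tau t n < 4 * \<delta> * (1 + 2 * ratio t n) / (1 + ratio t n)" using step_bound n by simp
    then have st2: "tau t n * (1 + ratio t n) < 4 * \<delta> * (1 + 2 * ratio t n)"
      using rpos by (simp add: less_divide_eq)
    have "4 * \<delta> * b0 = (4 * \<delta> * (1 + 2 * ratio t n)) / (tau t n * (1 + ratio t n))"
      by (simp add: b0e)
    also have "\<dots> > 1" using st2 tpn rpos by (simp add: less_divide_eq)
    finally show ?thesis using b0e tpn rpos by simp
  qed
  have si: "\<And>w. scheme_at L M \<delta> t (u(n := w)) n \<longleftrightarrow>
      (\<forall>i\<in>{1..int M}. \<forall>j\<in>{1..int M}. Res h \<delta> b0 c w i j = 0)"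
    using scheme_iff[of n L M \<delta> t u] n by (simp add: h_def b0_def c_def)
  obtain w where w: "w \<in> Vh M" "\<forall>i\<in>{1..int M}. \<forall>j\<in>{1..int M}. Res h \<delta> b0 c w i j = 0"
    using exists_sol[OF M_pos hpos delta_pos, of b0 c] b0facts by blast
  show "\<exists>!w. w \<in> Vh M \<and> scheme_at L M \<delta> t (u(n := w)) n"
  proof (rule ex1I[of _ w])
    show "w \<in> Vh M \<and> scheme_at L M \<delta> t (u(n := w)) n" using w si by simp
  next
    fix v assume "v \<in> Vh M \<and> scheme_at L M \<delta> t (u(n := v)) n"
    then show "v = w" using unique_sol[OF M_pos hpos delta_pos _ _ w(1), of b0 v c] b0facts w(2) si
      by blast
  qed
qed

end
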